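(* Let $M$ be a finite cyclic group, let $s,t\in M$ and let $d>1$ be an integer. Then there are integers $k,l$ with $s^k=t^l$ such that $d$ does not divide both $k$ and $l$. *)

theory Defs
  imports "HOL-Algebra.Elementary_Groups"
begin

end

theory Submission
  imports Defs
begin

theorem lemma4p2:
  fixes M (structure) and s t :: 'a and d :: int
  assumes "group M" and "cyclic_group M" and "finite (carrier M)"
    and "s \<in> carrier M" and "t \<in> carrier M" and "d > 1"
  shows "\<exists>k l :: int. s [^]\<^bsub>M\<^esub> k = t [^]\<^bsub>M\<^esub> l \<and> \<not> (d dvd k \<and> d dvd l)"
proof -
  interpret group M by fact
  obtain g where g: "g \<in> carrier M" "carrier M = range (\<lambda>n::int. g [^] n)"
    using assms(2) cyclic_group by blast
  obtain a b :: int where a: "s = g [^] a" and b: "t = g [^] b"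
    using assms(4,5) g by blast
  show ?thesis
  proof (cases "gcd a b = 0")
    case True
    then have "a = 0" "b = 0" by auto
    then have "s [^] (1::int) = t [^] (1::int)" using a b g by simp
    then show ?thesis using assms(6) by (intro exI[of _ 1]) (auto simp: zdvd_not_zless)
  next
    case False
    define c where "c = gcd a b"
    obtain a' where a': "a = c * a'" unfolding c_def by (meson gcd_dvd1 dvdE)
    obtain b' where b': "b = c * b'" unfolding c_def by (meson gcd_dvd2 dvdE)
    have cop: "gcd a' b' = 1"
      proof -
      have h: "gcd (c*a') (c*b') = \<bar>c\<bar> * gcd a' b'" by (rule gcd_mult_distrib_int[symmetric])
      have "gcd a b = \<bar>c\<bar> * gcd a' b'" using h a' b' by simp
      then have "\<bar>c\<bar> * gcd a' b' = c" unfolding c_def by simp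
      moreover have "c > 0" using False c_def by (simp add: order.not_eq_order_implies_strict)
      ultimately show ?thesis by simp
    qed
    have "s [^] b' = g [^] (a * b')" using a g by (simp add: int_pow_pow)
    also have "\<dots> = g [^] (b * a')" using a' b' by (simp add: algebra_simps)
    also have "\<dots> = t [^] a'" using b g by (simp add: int_pow_pow)
    finally have eq: "s [^] b' = t [^] a'" .
    have "\<not> (d dvd b' \<and> d dvd a')"
    proof
      assume "d dvd b' \<and> d dvd a'"
      then have "d dvd gcd a' b'" by simp
      then show False using cop assms(6) by (simp add: zdvd_not_zless)
    qed
    then show ?thesis using eq by blast
  qed
qed

end
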